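(* Let $T$ be a rooted tree, let $v$ be a vertex, and let $l$ be an integer with $l>\mathrm{level}(v)$. Let $u$ be the first vertex appearing after the first occurrence of $v$ in the Euler tour of $T$ such that $\mathrm{level}(u)\ge l$. If $u$ exists and is a descendant of $v$, then $u$ is the first level-$l$ descendant of $v$ (in preorder); otherwise $v$ has no descendant at level $l$. Equivalently, a vertex $u$ is the first level-$l$ descendant of $v$ if and only if it is that first vertex and it is a descendant of $v$.
   Context: The level of the root $r$ is $0$, and each other vertex has level one more than its parent. The Euler tour of $T$ is the sequence of $2n-1$ vertices (where $n$ is the number of vertices) obtained by traversing $T$ depth-first starting and ending at the root, each tree edge traversed once downward and once upward, listing the current vertex initially and after every step. "First level-$l$ descendant" means the first, in preorder, among the descendants of $v$ at level $l$. *)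

theory Defs
  imports Main "HOL-Library.Sublist"
begin

text \<open>Rooted ordered trees. A vertex is identified with its position: the list of
  child indices on the path from the root (the root is the empty list).\<close>

datatype tree = Node "tree list"

lemma size_nth_less[termination_simp]: "i < length ts \<Longrightarrow> size (ts ! i) < Suc (size_list size ts)"
  using size_list_estimation'[of "ts ! i" ts "size (ts ! i)" size] nth_mem by fastforce

fun vertices_pre :: "tree \<Rightarrow> nat list list" where
  "vertices_pre (Node ts) =
     [] # concat (map (\<lambda>i. map (Cons i) (vertices_pre (ts ! i))) [0..<length ts])"

fun euler_tour :: "tree \<Rightarrow> nat list list" where
  "euler_tour (Node ts) =
     [] # concat (map (\<lambda>i. map (Cons i) (euler_tour (ts ! i)) @ [[]]) [0..<length ts])"

definition preorder :: "tree \<Rightarrow> nat list list" where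
  "preorder t = vertices_pre t"

definition level :: "nat list \<Rightarrow> nat" where
  "level v = length v"

definition is_descendant :: "nat list \<Rightarrow> nat list \<Rightarrow> bool" where
  "is_descendant u v \<longleftrightarrow> prefix v u"

definition first_level_desc :: "tree \<Rightarrow> nat list \<Rightarrow> nat \<Rightarrow> nat list option" where
  "first_level_desc t v l = find (\<lambda>w. is_descendant w v \<and> level w = l) (preorder t)"

definition euler_next :: "tree \<Rightarrow> nat list \<Rightarrow> nat \<Rightarrow> nat list option" where
  "euler_next t v l = find (\<lambda>w. l \<le> level w) (tl (dropWhile (\<lambda>w. w \<noteq> v) (euler_tour t)))"

end

theory Submission
  imports Defs
begin

fun sub :: "tree \<Rightarrow> nat list \<Rightarrow> tree" where
  "sub t [] = t"
| "sub (Node ts) (i # v) = (if i < length ts then sub (ts ! i) v else Node [])"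

lemma find_app: "find P (xs @ ys) = (case find P xs of None \<Rightarrow> find P ys | Some x \<Rightarrow> Some x)"
  by (induction xs) auto

lemma find_map': "find P (map f xs) = map_option f (find (P \<circ> f) xs)"
  by (induction xs) auto

lemma find_filter': "find P (filter Q xs) = find (\<lambda>x. Q x \<and> P x) xs"
  by (induction xs) auto

lemma find_concat_cong:
  assumes "\<And>x. x \<in> set xs \<Longrightarrow> find P (f x) = find Q (g x)"
  shows "find P (concat (map f xs)) = find Q (concat (map g xs))"
  using assms by (induction xs) (auto simp: find_app split: option.splits)

lemma set_E: "set (euler_tour t) = set (vertices_pre t)"
proof (induction t rule: vertices_pre.induct)
  case (1 ts)
  show ?case
  proof
    show "set (euler_tour (Node ts)) \<subseteq> set (vertices_pre (Node ts))"
      using 1 by auto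
    show "set (vertices_pre (Node ts)) \<subseteq> set (euler_tour (Node ts))"
      using 1 by auto
  qed
qed

lemma E_ne: "euler_tour t = [] # tl (euler_tour t)"
  by (cases t) auto

lemma V_ne: "vertices_pre t = [] # tl (vertices_pre t)"
  by (cases t) auto

lemma lemB: "1 \<le> k \<Longrightarrow> find (\<lambda>w. k \<le> length w) (tl (euler_tour s)) = find (\<lambda>w. length w = k) (vertices_pre s)"
proof (induction s arbitrary: k rule: vertices_pre.induct)
  case (1 ts)
  show ?case
  proof -
    have "find (\<lambda>w. k \<le> length w) (tl (euler_tour (Node ts))) =
          find (\<lambda>w. k \<le> length w) (concat (map (\<lambda>i. map (Cons i) (euler_tour (ts ! i)) @ [[]]) [0..<length ts]))"
      by simp
    also have "\<dots> = find (\<lambda>w. length w = k) (concat (map (\<lambda>i. map (Cons i) (vertices_pre (ts ! i))) [0..<length ts]))"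
    proof (rule find_concat_cong)
      fix i assume i: "i \<in> set [0..<length ts]"
      have "find (\<lambda>w. k \<le> length w) (map (Cons i) (euler_tour (ts ! i)) @ [[]])
           = find (\<lambda>w. k \<le> length w) (map (Cons i) (euler_tour (ts ! i)))"
        using 1(2) by (auto simp: find_app split: option.splits)
      also have "\<dots> = find (\<lambda>w. length w = k) (map (Cons i) (vertices_pre (ts ! i)))"
      proof (cases "k = 1")
        case True
        then show ?thesis
          by (subst E_ne, subst V_ne) simp
      next
        case False
        have IH: "find (\<lambda>w. k - 1 \<le> length w) (tl (euler_tour (ts ! i))) = find (\<lambda>w. length w = k - 1) (vertices_pre (ts ! i))"
          using 1(1)[of i "k - 1"] i False 1(2) by auto
        have "find (\<lambda>w. k \<le> length w) (map (Cons i) (euler_tour (ts ! i)))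
            = map_option (Cons i) (find (\<lambda>w. k - 1 \<le> length w) (tl (euler_tour (ts ! i))))"
          using False 1(2) by (subst E_ne) (simp add: find_map' o_def, simp add: le_diff_conv)
        also have "\<dots> = map_option (Cons i) (find (\<lambda>w. length w = k - 1) (vertices_pre (ts ! i)))"
          using IH by simp
        also have "\<dots> = find (\<lambda>w. length w = k) (map (Cons i) (vertices_pre (ts ! i)))"
        proof -
          have "(\<lambda>w. length w = k) \<circ> Cons i = (\<lambda>w. length w = k - 1)" using False 1(2) by auto
          then show ?thesis by (simp add: find_map')
        qed
        finally show ?thesis .
      qed
      finally show "find (\<lambda>w. k \<le> length w) (map (Cons i) (euler_tour (ts ! i)) @ [[]]) =
           find (\<lambda>w. length w = k) (map (Cons i) (vertices_pre (ts ! i)))" .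
    qed
    also have "\<dots> = find (\<lambda>w. length w = k) (vertices_pre (Node ts))"
      using 1(2) by simp
    finally show ?thesis .
  qed
qed

lemma mem_V_Cons: "i # v \<in> set (vertices_pre (Node ts)) \<Longrightarrow> i < length ts \<and> v \<in> set (vertices_pre (ts ! i))"
  by auto

lemma spl: "i < n \<Longrightarrow> [0..<n] = [0..<i] @ [i] @ [Suc i..<n]"
  by (metis append_Cons append_Nil less_imp_le_nat upt_conv_Cons upt_add_eq_append le_add_diff_inverse zero_le)

lemma filt_Cons: "filter (prefix (i # v')) (map (Cons j) X) = (if j = i then map (Cons i) (filter (prefix v') X) else [])"
  by (induction X) auto

lemma concat_if: "i < n \<Longrightarrow> concat (map (\<lambda>j. if j = i then f j else []) [0..<n]) = f i"
proof -
  assume i: "i < n"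
  have a: "concat (map (\<lambda>j. if j = i then f j else []) [0..<i]) = []" by simp
  have b: "concat (map (\<lambda>j. if j = i then f j else []) [Suc i..<n]) = []" by simp
  show ?thesis unfolding spl[OF i] map_append concat_append a b by simp
qed

lemma lemC: "v \<in> set (vertices_pre t) \<Longrightarrow> filter (\<lambda>w. prefix v w) (vertices_pre t) = map ((@) v) (vertices_pre (sub t v))"
proof (induction t arbitrary: v rule: vertices_pre.induct)
  case (1 ts)
  show ?case
  proof (cases v)
    case Nil
    then show ?thesis by (simp add: filter_True)
  next
    case (Cons i v')
    from mem_V_Cons[of i v' ts] 1(2) Cons have i: "i < length ts" and v': "v' \<in> set (vertices_pre (ts ! i))" by auto
    have "filter (\<lambda>w. prefix v w) (vertices_pre (Node ts)) =
      concat (map (\<lambda>j. filter (prefix v) (map (Cons j) (vertices_pre (ts ! j)))) [0..<length ts])"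
      by (simp add: filter_concat Cons o_def)
    also have "\<dots> = concat (map (\<lambda>j. if j = i then map (Cons j) (filter (prefix v') (vertices_pre (ts ! j))) else []) [0..<length ts])"
      unfolding Cons filt_Cons by (rule arg_cong[where f=concat], rule map_cong) auto
    also have "\<dots> = map (Cons i) (filter (prefix v') (vertices_pre (ts ! i)))"
      by (rule concat_if[OF i])
    also have "\<dots> = map ((@) v) (vertices_pre (sub (Node ts) v))"
      using 1(1)[OF _ v'] i by (simp add: Cons)
    finally show ?thesis .
  qed
qed

lemma dw_map: "dropWhile (\<lambda>w. w \<noteq> i # v') (map (Cons i) X) = map (Cons i) (dropWhile (\<lambda>w. w \<noteq> v') X)"
  by (induction X) auto

definition nopd :: "nat list \<Rightarrow> nat list list \<Rightarrow> bool" where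
  "nopd v ys \<longleftrightarrow> (\<forall>w\<in>set ys. \<not> (prefix v w \<and> w \<noteq> v))"

lemma lemA: "v \<in> set (vertices_pre t) \<Longrightarrow>
  \<exists>ys. dropWhile (\<lambda>w. w \<noteq> v) (euler_tour t) = map ((@) v) (euler_tour (sub t v)) @ ys \<and> nopd v ys"
proof (induction t arbitrary: v rule: vertices_pre.induct)
  case (1 ts)
  show ?case
  proof (cases v)
    case Nil
    then show ?thesis by (auto simp: nopd_def)
  next
    case (Cons i v')
    from mem_V_Cons[of i v' ts] 1(2) Cons have i: "i < length ts" and v': "v' \<in> set (vertices_pre (ts ! i))" by auto
    obtain ys' where ys': "dropWhile (\<lambda>w. w \<noteq> v') (euler_tour (ts ! i)) = map ((@) v') (euler_tour (sub (ts ! i) v')) @ ys'"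
      and nys': "nopd v' ys'"
      using "1.IH"[OF _ v'] i by auto
    define B where "B = (\<lambda>j. map (Cons j) (euler_tour (ts ! j)) @ [[]])"
    have E0: "euler_tour (Node ts) = [] # concat (map B [0..<length ts])"
      by (simp add: B_def)
    have E: "euler_tour (Node ts) = [] # concat (map B [0..<i]) @ B i @ concat (map B [Suc i..<length ts])"
      unfolding E0 spl[OF i] by simp
    have skip: "\<forall>x\<in>set ([] # concat (map B [0..<i])). x \<noteq> v"
      by (auto simp: B_def Cons)
    have v'E: "v' \<in> set (euler_tour (ts ! i))" using v' set_E by auto
    have dB: "dropWhile (\<lambda>w. w \<noteq> v) (B i) = map (Cons i) (dropWhile (\<lambda>w. w \<noteq> v') (euler_tour (ts ! i))) @ [[]]"
    proof -
      have "\<exists>x\<in>set (map (Cons i) (euler_tour (ts ! i))). \<not> x \<noteq> v" using v'E Cons by auto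
      then have "dropWhile (\<lambda>w. w \<noteq> v) (B i) = dropWhile (\<lambda>w. w \<noteq> v) (map (Cons i) (euler_tour (ts ! i))) @ [[]]"
        unfolding B_def by (elim bexE) (rule dropWhile_append1)
      also have "dropWhile (\<lambda>w. w \<noteq> v) (map (Cons i) (euler_tour (ts ! i))) = map (Cons i) (dropWhile (\<lambda>w. w \<noteq> v') (euler_tour (ts ! i)))"
        by (simp add: Cons dw_map)
      finally show ?thesis .
    qed
    have "dropWhile (\<lambda>w. w \<noteq> v) (euler_tour (Node ts)) = dropWhile (\<lambda>w. w \<noteq> v) (B i) @ concat (map B [Suc i..<length ts])"
    proof -
      have "dropWhile (\<lambda>w. w \<noteq> v) (euler_tour (Node ts)) = dropWhile (\<lambda>w. w \<noteq> v) (B i @ concat (map B [Suc i..<length ts]))"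
      proof -
        have E': "euler_tour (Node ts) = ([] # concat (map B [0..<i])) @ (B i @ concat (map B [Suc i..<length ts]))"
          using E by simp
        show ?thesis unfolding E' by (rule dropWhile_append2) (use skip in blast)
      qed
      also have "\<dots> = dropWhile (\<lambda>w. w \<noteq> v) (B i) @ concat (map B [Suc i..<length ts])"
        using v'E Cons by (intro dropWhile_append1) (auto simp: B_def)
      finally show ?thesis .
    qed
    also have "\<dots> = map ((@) v) (euler_tour (sub (Node ts) v)) @ (map (Cons i) ys' @ [[]] @ concat (map B [Suc i..<length ts]))"
      using dB ys' i by (simp add: Cons)
    finally have D: "dropWhile (\<lambda>w. w \<noteq> v) (euler_tour (Node ts)) = map ((@) v) (euler_tour (sub (Node ts) v)) @ (map (Cons i) ys' @ [[]] @ concat (map B [Suc i..<length ts]))" .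
    moreover have "nopd v (map (Cons i) ys' @ [[]] @ concat (map B [Suc i..<length ts]))"
      using nys' unfolding nopd_def by (auto simp: Cons B_def)
    ultimately show ?thesis by blast
  qed
qed

theorem mainTheorem5:
  fixes t :: tree and v :: "nat list" and l :: nat
  assumes "v \<in> set (preorder t)" and "level v < l"
  shows "(\<forall>u. euler_next t v l = Some u \<and> is_descendant u v
              \<longrightarrow> first_level_desc t v l = Some u)
       \<and> (\<not> (\<exists>u. euler_next t v l = Some u \<and> is_descendant u v)
              \<longrightarrow> \<not> (\<exists>w\<in>set (preorder t). is_descendant w v \<and> level w = l))
       \<and> (\<forall>u. first_level_desc t v l = Some u \<longleftrightarrow>
              (euler_next t v l = Some u \<and> is_descendant u v))"
proof -
  have vV: "v \<in> set (vertices_pre t)" using assms(1) by (simp add: preorder_def)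
  define s where "s = sub t v"
  define k where "k = l - length v"
  have k1: "1 \<le> k" using assms(2) by (simp add: k_def level_def)
  obtain ys where ys: "dropWhile (\<lambda>w. w \<noteq> v) (euler_tour t) = map ((@) v) (euler_tour s) @ ys"
    and nys: "nopd v ys" using lemA[OF vV] s_def by auto
  define F where "F = map_option ((@) v) (find (\<lambda>w. length w = k) (vertices_pre s))"
  have en: "euler_next t v l = (case F of None \<Rightarrow> find (\<lambda>w. l \<le> length w) ys | Some x \<Rightarrow> Some x)"
  proof -
    have "tl (dropWhile (\<lambda>w. w \<noteq> v) (euler_tour t)) = map ((@) v) (tl (euler_tour s)) @ ys"
      unfolding ys by (subst E_ne) simp
    moreover have "find (\<lambda>w. l \<le> length w) (map ((@) v) (tl (euler_tour s))) = F"
      unfolding F_def find_map' o_def using lemB[OF k1, of s] assms(2)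
      by (simp add: k_def level_def le_diff_conv add.commute)
    ultimately show ?thesis unfolding euler_next_def level_def by (simp add: find_app)
  qed
  have fl: "first_level_desc t v l = F"
  proof -
    have "first_level_desc t v l = find (\<lambda>w. length w = l) (filter (\<lambda>w. prefix v w) (vertices_pre t))"
      unfolding first_level_desc_def find_filter' preorder_def is_descendant_def level_def by simp
    also have "\<dots> = F" unfolding lemC[OF vV] F_def find_map' o_def s_def
      using assms(2) by (simp add: k_def level_def) (rule arg_cong[where f="\<lambda>P. map_option _ (find P _)"], auto)
    finally show ?thesis .
  qed
  have Fdesc: "F = Some u \<Longrightarrow> is_descendant u v" for u
    by (auto simp: F_def is_descendant_def)
  show ?thesis
  proof (cases F)
    case None
    have nodesc: "\<not> (euler_next t v l = Some u \<and> is_descendant u v)" for u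
    proof
      assume h: "euler_next t v l = Some u \<and> is_descendant u v"
      then have "u \<in> set ys" "l \<le> length u" using en None by (auto simp: find_Some_iff)
      then show False using h nys assms(2) by (auto simp: nopd_def is_descendant_def level_def)
    qed
    have "\<not> (\<exists>w\<in>set (preorder t). is_descendant w v \<and> level w = l)"
      using fl None unfolding first_level_desc_def by (simp add: find_None_iff)
    then show ?thesis using nodesc fl None by auto
  next
    case (Some x)
    then show ?thesis using en fl Fdesc by auto
  qed
qed

end
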